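(* Let $k>1$ be an integer and let $n$ be a pseudoprime of basis $k$. Let $\Pi_n$ denote the number of periodic points of prime period $n$ of the circle map $f(\theta)=k\theta \pmod{2\pi}$. Then $$\frac{k^{n}-k-\Pi_n}{n}\in\mathbb{N}.$$
   Context: A positive integer $n$ is called a pseudoprime of basis $k$ (where $k>1$ is an integer) if $n$ is an odd composite number, $\gcd(n,k)=1$, and $k^{n-1}\equiv 1 \pmod n$. The circle map with parameter $k$ is $f:S^1\to S^1$, $f(\theta)=k\theta \pmod{2\pi}$, where $\theta\in[0,2\pi)$ is the angular coordinate on the unit circle $S^1$. A point $\theta$ is a periodic point of prime (i.e. least) period $n$ if $f^{n}(\theta)=\theta$ and $f^{m}(\theta)\neq\theta$ for $0<m<n$; $\Pi_n$ is the number of such points. $\mathbb{N}$ denotes the positive integers. *)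

theory Defs
  imports "HOL-Analysis.Analysis" "HOL-Number_Theory.Number_Theory"
begin

definition pseudoprime :: "nat \<Rightarrow> nat \<Rightarrow> bool" where
  "pseudoprime k n \<longleftrightarrow> odd n \<and> n > 1 \<and> \<not> prime n \<and> coprime n k \<and> [k ^ (n - 1) = 1] (mod n)"

definition circle_map :: "nat \<Rightarrow> real \<Rightarrow> real" where
  "circle_map k \<theta> = real k * \<theta> - 2 * pi * of_int \<lfloor>real k * \<theta> / (2 * pi)\<rfloor>"

definition Pi_count :: "nat \<Rightarrow> nat \<Rightarrow> nat" where
  "Pi_count k n = card {\<theta> \<in> {0..<2 * pi}. (circle_map k ^^ n) \<theta> = \<theta> \<and>
      (\<forall>m. 0 < m \<and> m < n \<longrightarrow> (circle_map k ^^ m) \<theta> \<noteq> \<theta>)}"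

end

theory Submission
  imports Defs
begin

lemma fpa: "(h ^^ a) ((h ^^ b) x) = (h ^^ (a + b)) x"
  by (simp add: funpow_add)

lemma period_dvd:
  fixes h :: "'a \<Rightarrow> 'a"
  assumes "finite A" "\<forall>x\<in>A. h x \<in> A"
    "\<And>x. (h ^^ n) x = x \<or> x \<notin> A"
    "\<And>x m. x \<in> A \<Longrightarrow> 0 < m \<Longrightarrow> m < n \<Longrightarrow> (h ^^ m) x \<noteq> x"
    "n > 0"
  shows "n dvd card A"
  using assms(1,2,3,4)
proof (induction "card A" arbitrary: A rule: less_induct)
  case less
  note assms = less.prems(1,2,3,4) assms(5)
  show ?case
  proof (cases "A = {}")
    case True then show ?thesis by simp
  next
    case False
    then obtain x where xA: "x \<in> A" by blast
    define Or where "Or = (\<lambda>i. (h ^^ i) x) ` {..<n}"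
    have orbA: "(h ^^ i) x \<in> A" for i
      by (induction i) (use xA assms(2) in auto)
    have inj: "inj_on (\<lambda>i. (h ^^ i) x) {..<n}"
    proof -
      have *: False if "i < j" "j < n" "(h ^^ i) x = (h ^^ j) x" for i j
      proof -
        have "(h ^^ (n - j + i)) x = (h ^^ (n - j)) ((h ^^ i) x)" by (simp add: fpa)
        also have "\<dots> = (h ^^ (n - j)) ((h ^^ j) x)" using that by simp
        also have "\<dots> = (h ^^ n) x" using that by (simp add: fpa)
        also have "\<dots> = x" using assms(3)[of x] xA by simp
        finally show False using assms(4)[OF xA, of "n - j + i"] that by linarith
      qed
      show ?thesis unfolding inj_on_def
        by (metis * lessThan_iff linorder_neqE_nat)
    qed
    have cardO: "card Or = n" unfolding Or_def using inj by (simp add: card_image)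
    have OA: "Or \<subseteq> A" unfolding Or_def using orbA by auto
    have closed: "h y \<in> A - Or" if "y \<in> A - Or" for y
    proof (rule ccontr)
      assume "h y \<notin> A - Or"
      then have "h y \<in> Or" using that assms(2) by auto
      then obtain i where i: "i < n" "h y = (h ^^ i) x" unfolding Or_def by auto
      have "y = (h ^^ n) y" using assms(3)[of y] that by simp
      also have "\<dots> = (h ^^ (n - 1)) (h y)"
        using assms(5) by (metis Suc_diff_1 funpow_Suc_right o_apply)
      also have "\<dots> = (h ^^ (n - 1 + i)) x" using i by (simp add: fpa)
      finally have yeq: "y = (h ^^ (n - 1 + i)) x" .
      have "y \<in> Or"
      proof (cases i)
        case 0
        then show ?thesis using yeq assms(5) unfolding Or_def by auto
      next
        case (Suc i')
        have "n - 1 + i = i' + n" using Suc assms(5) by simp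
        then have "y = (h ^^ i') ((h ^^ n) x)" using yeq by (simp add: fpa)
        then have "y = (h ^^ i') x" using assms(3)[of x] xA by simp
        then show ?thesis unfolding Or_def using Suc i by auto
      qed
      then show False using that by auto
    qed
    have fin: "finite (A - Or)" using less.prems by simp
    have finO: "finite Or" using less.prems(1) OA finite_subset by blast
    have cd: "card (A - Or) = card A - n"
      using card_Diff_subset[OF finO OA] cardO by simp
    have le: "n \<le> card A" using card_mono[OF less.prems(1) OA] cardO by simp
    have lt: "card (A - Or) < card A" using cd le assms(5) by simp
    have "n dvd card (A - Or)"
      apply (rule less.hyps[OF lt fin])
      using closed assms(3,4) by auto
    moreover have "card A = card (A - Or) + n"
      using cd le by simp
    ultimately show ?thesis by simp
  qed
qed

definition md :: "real \<Rightarrow> real" where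
  "md y = y - 2 * pi * of_int \<lfloor>y / (2 * pi)\<rfloor>"

lemma cm_md: "circle_map k \<theta> = md (real k * \<theta>)"
  by (simp add: circle_map_def md_def)

lemma md_shift: "md (y + 2 * pi * of_int j) = md y"
proof -
  have "(y + 2 * pi * of_int j) / (2 * pi) = y / (2 * pi) + of_int j"
    by (simp add: field_simps)
  then show ?thesis unfolding md_def by (simp add: algebra_simps)
qed

lemma md_mult: "md (real k * md y) = md (real k * y)"
proof -
  have "real k * md y = real k * y + 2 * pi * of_int (- (int k * \<lfloor>y / (2 * pi)\<rfloor>))"
    unfolding md_def by (simp add: algebra_simps)
  then show ?thesis by (simp only: md_shift)
qed

lemma md_id: "0 \<le> y \<Longrightarrow> y < 2 * pi \<Longrightarrow> md y = y"
proof -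
  assume "0 \<le> y" "y < 2 * pi"
  then have "\<lfloor>y / (2 * pi)\<rfloor> = 0" by (simp add: floor_eq_iff)
  then show ?thesis unfolding md_def by simp
qed

lemma md_range: "0 \<le> md y \<and> md y < 2 * pi"
proof -
  have a: "of_int \<lfloor>y / (2 * pi)\<rfloor> \<le> y / (2 * pi)" by (rule of_int_floor_le)
  have b: "y / (2 * pi) < of_int \<lfloor>y / (2 * pi)\<rfloor> + 1" by (rule real_of_int_floor_add_one_gt)
  have p: "2 * pi > 0" by simp
  from a p have "of_int \<lfloor>y / (2 * pi)\<rfloor> * (2 * pi) \<le> y" by (simp only: pos_le_divide_eq)
  moreover from b p have "y < (of_int \<lfloor>y / (2 * pi)\<rfloor> + 1) * (2 * pi)" by (simp only: pos_divide_less_eq)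
  ultimately show ?thesis unfolding md_def by (simp add: algebra_simps)
qed

lemma cm_iter: "0 \<le> \<theta> \<Longrightarrow> \<theta> < 2 * pi \<Longrightarrow> (circle_map k ^^ m) \<theta> = md (real k ^ m * \<theta>)"
proof (induction m)
  case 0 then show ?case by (simp add: md_id)
next
  case (Suc m)
  then show ?case by (simp add: cm_md md_mult mult.assoc)
qed

lemma fixset:
  assumes "k > 1" "m > 0"
  shows "{\<theta> \<in> {0..<2 * pi}. (circle_map k ^^ m) \<theta> = \<theta>}
         = (\<lambda>j. 2 * pi * real j / (real k ^ m - 1)) ` {0..<k ^ m - 1}"
proof -
  define R where "R = real k ^ m"
  have Kge: "k ^ m \<ge> 2"
    using assms by (metis One_nat_def Suc_1 Suc_leI not_less power_increasing_iff power_one_right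
        less_one nat_neq_iff power_0 one_le_power order.trans less_imp_le_nat le_simps(3))
  have R: "R = real (k ^ m)" unfolding R_def by simp
  have "real (k ^ m) \<ge> 2" using Kge by linarith
  then have R1: "R - 1 > 0" using R by linarith
  have p: "pi > 0" by simp
  show ?thesis
  proof (intro equalityI subsetI)
    fix \<theta> assume "\<theta> \<in> {\<theta> \<in> {0..<2 * pi}. (circle_map k ^^ m) \<theta> = \<theta>}"
    then have t0: "0 \<le> \<theta>" and t1: "\<theta> < 2 * pi" and fx: "md (R * \<theta>) = \<theta>"
      using cm_iter[where k=k and m=m] unfolding R_def by auto
    define j where "j = \<lfloor>R * \<theta> / (2 * pi)\<rfloor>"
    have e: "R * \<theta> - 2 * pi * of_int j = \<theta>" using fx unfolding md_def j_def by simp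
    then have e2: "(R - 1) * \<theta> = 2 * pi * of_int j" by (simp add: algebra_simps)
    have "0 \<le> (R - 1) * \<theta>" using R1 t0 by simp
    then have j0: "j \<ge> 0" using e2 p by (simp add: zero_le_mult_iff)
    have "(R - 1) * \<theta> < (R - 1) * (2 * pi)" using R1 t1 by simp
    then have "of_int j < R - 1" using e2 p by simp
    then have jl: "nat j < k ^ m - 1" using j0 R Kge by linarith
    have "\<theta> = 2 * pi * real (nat j) / (R - 1)" using e2 R1 j0 by (simp add: field_simps)
    then show "\<theta> \<in> (\<lambda>j. 2 * pi * real j / (real k ^ m - 1)) ` {0..<k ^ m - 1}"
      using jl unfolding R_def by auto
  next
    fix \<theta> assume "\<theta> \<in> (\<lambda>j. 2 * pi * real j / (real k ^ m - 1)) ` {0..<k ^ m - 1}"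
    then obtain j where jl: "j < k ^ m - 1" and th: "\<theta> = 2 * pi * real j / (R - 1)"
      unfolding R_def by auto
    have jR: "real j < R - 1" using jl R Kge by linarith
    have t0: "0 \<le> \<theta>" using th R1 by simp
    have "\<theta> * (R - 1) = 2 * pi * real j" using th R1 by simp
    then have "\<theta> * (R - 1) < 2 * pi * (R - 1)" using jR p by simp
    then have t1: "\<theta> < 2 * pi" using R1 by simp
    have "R * \<theta> = \<theta> + 2 * pi * of_int (int j)" using th R1 by (simp add: field_simps)
    then have "md (R * \<theta>) = md \<theta>" by (simp only: md_shift)
    then have "md (R * \<theta>) = \<theta>" using md_id t0 t1 by simp
    then show "\<theta> \<in> {\<theta> \<in> {0..<2 * pi}. (circle_map k ^^ m) \<theta> = \<theta>}"
      using cm_iter[where k=k and m=m] t0 t1 unfolding R_def by auto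
  qed
qed

lemma card_fixset:
  assumes "k > 1" "m > 0"
  shows "card {\<theta> \<in> {0..<2 * pi}. (circle_map k ^^ m) \<theta> = \<theta>} = k ^ m - 1"
    and "finite {\<theta> \<in> {0..<2 * pi}. (circle_map k ^^ m) \<theta> = \<theta>}"
proof -
  have Kge: "real k ^ m > 1" using assms by simp
  have "inj_on (\<lambda>j. 2 * pi * real j / (real k ^ m - 1)) {0..<k ^ m - 1}"
    using Kge by (auto simp: inj_on_def)
  then show "card {\<theta> \<in> {0..<2 * pi}. (circle_map k ^^ m) \<theta> = \<theta>} = k ^ m - 1"
    unfolding fixset[OF assms] by (simp add: card_image)
  show "finite {\<theta> \<in> {0..<2 * pi}. (circle_map k ^^ m) \<theta> = \<theta>}"
    unfolding fixset[OF assms] by simp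
qed

theorem theorem1:
  fixes k n :: nat
  assumes "k > 1" and "pseudoprime k n"
  shows "\<exists>m::nat. m > 0 \<and> int k ^ n - int k - int (Pi_count k n) = int n * int m"
proof -
  have n1: "n > 1" and np: "\<not> prime n" and cg: "[k ^ (n - 1) = 1] (mod n)"
    using assms(2) unfolding pseudoprime_def by auto
  obtain p where pd: "p dvd n" and p1: "p \<noteq> 1" and pn: "p \<noteq> n"
    using n1 np unfolding prime_nat_iff by auto
  have p0: "p > 0" using pd n1 by (metis dvd_0_left_iff gr0I not_one_less_zero)
  have pl: "p < n" using pd pn n1 by (meson dvd_imp_le le_neq_implies_less less_trans zero_less_one)
  have p2: "p \<ge> 2" using p0 p1 by simp
  define h where "h = circle_map k"
  define S where "S m = {\<theta> \<in> {0..<2 * pi}. (h ^^ m) \<theta> = \<theta>}" for m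
  define P where "P = {\<theta> \<in> {0..<2 * pi}. (h ^^ n) \<theta> = \<theta> \<and>
      (\<forall>m. 0 < m \<and> m < n \<longrightarrow> (h ^^ m) \<theta> \<noteq> \<theta>)}"
  have PC: "Pi_count k n = card P" unfolding Pi_count_def P_def h_def by simp
  have cS: "card (S m) = k ^ m - 1" "finite (S m)" if "m > 0" for m
    using card_fixset[OF assms(1) that] unfolding S_def h_def by auto
  have PS: "P \<subseteq> S n - S p" unfolding P_def S_def using p0 pl by auto
  obtain q where q: "n = p * q" using pd by auto
  have Spn: "S p \<subseteq> S n"
  proof
    fix \<theta> assume a: "\<theta> \<in> S p"
    have "(h ^^ (p * r)) \<theta> = \<theta>" for r
    proof (induction r)
      case 0 then show ?case by simp
    next
      case (Suc r)
      have "(h ^^ (p * Suc r)) \<theta> = (h ^^ (p * r)) ((h ^^ p) \<theta>)"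
        by (simp add: fpa add.commute)
      then show ?case using a Suc unfolding S_def by simp
    qed
    then show "\<theta> \<in> S n" using a q unfolding S_def by auto
  qed
  have finP: "finite P" using PS cS(2)[of n] n1 by (meson Diff_subset finite_subset less_trans zero_less_one)
  have closed: "\<forall>x\<in>P. h x \<in> P"
  proof
    fix \<theta> assume a: "\<theta> \<in> P"
    have r: "0 \<le> h \<theta> \<and> h \<theta> < 2 * pi" unfolding h_def cm_md using md_range by simp
    have f: "(h ^^ n) (h \<theta>) = h \<theta>" using a unfolding P_def by (simp add: funpow_swap1[symmetric])
    have "(h ^^ m) (h \<theta>) \<noteq> h \<theta>" if m: "0 < m" "m < n" for m
    proof
      assume e: "(h ^^ m) (h \<theta>) = h \<theta>"
      have "(h ^^ (n - 1)) ((h ^^ m) (h \<theta>)) = (h ^^ (n - 1)) (h \<theta>)" using e by simp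
      moreover have "(h ^^ (n - 1)) (h \<theta>) = (h ^^ n) \<theta>"
        using n1 by (metis Suc_diff_1 funpow_Suc_right o_apply zero_less_one less_trans)
      moreover have "(h ^^ (n - 1)) ((h ^^ m) (h \<theta>)) = (h ^^ m) ((h ^^ (n - 1)) (h \<theta>))"
        by (simp add: fpa add.commute)
      ultimately have "(h ^^ m) \<theta> = \<theta>" using a unfolding P_def by simp
      then show False using a m unfolding P_def by auto
    qed
    then show "h \<theta> \<in> P" using r f unfolding P_def by auto
  qed
  have dP: "n dvd card P"
    apply (rule period_dvd[OF finP closed])
    using n1 unfolding P_def by auto
  have "card P \<le> card (S n - S p)" using PS finP cS(2)[of n] n1 by (simp add: card_mono)
  also have "\<dots> = card (S n) - card (S p)" using Spn cS(2)[OF p0] by (simp add: card_Diff_subset)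
  also have "\<dots> = (k ^ n - 1) - (k ^ p - 1)" using cS(1) n1 p0 by simp
  finally have cP: "card P \<le> (k ^ n - 1) - (k ^ p - 1)" .
  have kk: "k ^ 2 \<le> k ^ p" using p2 assms(1) by (simp add: power_increasing)
  have kk2: "k < k ^ 2" using assms(1) by (simp add: power2_eq_square)
  have kn: "k ^ p \<le> k ^ n" using pl assms(1) by (simp add: power_increasing)
  have lt: "card P < k ^ n - k" using cP kk kk2 kn by linarith
  have "[k * k ^ (n - 1) = k * 1] (mod n)" using cg by (rule cong_scalar_left)
  then have "[k ^ n = k] (mod n)" using n1 by (metis Suc_diff_1 less_trans zero_less_one power_Suc mult_1_right)
  then have dk: "n dvd k ^ n - k" using kk kk2 kn by (subst cong_altdef_nat[symmetric]) auto
  have dd: "n dvd k ^ n - k - card P" using dk dP by (rule dvd_diff_nat)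
  then obtain M where M: "k ^ n - k - card P = n * M" by blast
  have M0: "M > 0" using M lt by (metis gr0I mult_0_right zero_less_diff)
  have "int k ^ n - int k - int (card P) = int (k ^ n - k - card P)"
    using lt by (simp add: of_nat_diff)
  then show ?thesis unfolding PC using M M0 by (intro exI[of _ M]) simp
qed

end
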